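(* Let $f:\mathbb{R}^n\to\mathbb{R}$ be continuously differentiable with $L_f$-Lipschitz gradient, let $g:\mathbb{R}^n\to\mathbb{R}\cup\{+\infty\}$ be proper, closed and $M$-weakly convex, $\varphi=f+g$, and let $(x^k),(w^k),(\gamma_k)$ be generated by MINFBE with $0<\gamma_0\le 1/(2M)$. Let $c=\min\{\gamma_0,\xi(1-\beta)/L_f,1/M\}>0$. Then for all $k$, $$\min_{i\le k}\|R_{\gamma_i}(x^i)\|^2\le\frac{2}{k+1}\,\frac{\varphi(x^0)-\inf\varphi}{c-Mc^2}.$$ If in addition $\beta>0$, then also $$\min_{i\le k}\|R_{\gamma_i}(w^i)\|^2\le\frac{2}{k+1}\,\frac{\varphi(x^0)-\inf\varphi}{\beta c}.$$
   Context: $g$ is $M$-weakly convex if $g+\frac M2\|\cdot\|^2$ is convex. For $\gamma>0$: $T_\gamma(x)=\operatorname{prox}_{\gamma g}(x-\gamma\nabla f(x))$ with $\operatorname{prox}_{\gamma g}(x)=\arg\min_u\{g(u)+\frac1{2\gamma}\|u-x\|^2\}$, $R_\gamma(x)=\gamma^{-1}(x-T_\gamma(x))$, $\varphi_\gamma(x)=\min_u\{f(x)+\langle\nabla f(x),u-x\rangle+g(u)+\frac1{2\gamma}\|u-x\|^2\}$. MINFBE: given $x^0$, $\gamma_0>0$, $\xi\in(0,1)$, $\beta\in[0,1)$, set $k=0$ and repeat: (1) if $R_{\gamma_k}(x^k)=0$ stop; (2) choose $d^k$ with $\langle d^k,\nabla\varphi_{\gamma_k}(x^k)\rangle\le0$;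 (3) choose $\tau_k\ge0$ and $w^k=x^k+\tau_kd^k$ with $\varphi_{\gamma_k}(w^k)\le\varphi_{\gamma_k}(x^k)$; (4) if $f(T_{\gamma_k}(w^k))>f(w^k)-\gamma_k\langle\nabla f(w^k),R_{\gamma_k}(w^k)\rangle+\frac{(1-\beta)\gamma_k}{2}\|R_{\gamma_k}(w^k)\|^2$, replace $\gamma_k$ by $\xi\gamma_k$ and go back to (1) with the same $k$; (5) otherwise set $x^{k+1}=T_{\gamma_k}(w^k)$, $\gamma_{k+1}=\gamma_k$, $k\leftarrow k+1$, go to (1). *)

theory Defs
  imports "HOL-Analysis.Analysis" "HOL-Library.Extended_Real"
begin

text \<open>Extended-valued functions g : R^n -> R \<union> {+\<infinity>} are modelled as ereal-valued functions
  with proper meaning: never -\<infinity>, and not identically +\<infinity>.\<close>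

definition proper_fun :: "('a \<Rightarrow> ereal) \<Rightarrow> bool" where
  "proper_fun g \<longleftrightarrow> (\<forall>x. g x \<noteq> -\<infinity>) \<and> (\<exists>x. g x \<noteq> \<infinity>)"

definition closed_fun :: "('a::topological_space \<Rightarrow> ereal) \<Rightarrow> bool" where
  "closed_fun g \<longleftrightarrow> closed {(x, t::real). g x \<le> ereal t}"

definition convex_fun :: "('a::real_vector \<Rightarrow> ereal) \<Rightarrow> bool" where
  "convex_fun g \<longleftrightarrow> convex {(x, t::real). g x \<le> ereal t}"

definition weakly_convex :: "real \<Rightarrow> ('a::real_normed_vector \<Rightarrow> ereal) \<Rightarrow> bool" where
  "weakly_convex M g \<longleftrightarrow> convex_fun (\<lambda>x. g x + ereal (M / 2 * (norm x)\<^sup>2))"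

text \<open>proximal map: the (unique, for small gamma) minimizer\<close>
definition prox :: "('a::real_normed_vector \<Rightarrow> ereal) \<Rightarrow> real \<Rightarrow> 'a \<Rightarrow> 'a" where
  "prox g \<gamma> x = (THE u. \<forall>v. g u + ereal ((norm (u - x))\<^sup>2 / (2 * \<gamma>))
                              \<le> g v + ereal ((norm (v - x))\<^sup>2 / (2 * \<gamma>)))"

definition Tfb :: "('a::real_inner \<Rightarrow> 'a) \<Rightarrow> ('a \<Rightarrow> ereal) \<Rightarrow> real \<Rightarrow> 'a \<Rightarrow> 'a" where
  "Tfb gf g \<gamma> x = prox g \<gamma> (x - \<gamma> *\<^sub>R gf x)"

definition Rfb :: "('a::real_inner \<Rightarrow> 'a) \<Rightarrow> ('a \<Rightarrow> ereal) \<Rightarrow> real \<Rightarrow> 'a \<Rightarrow> 'a" where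
  "Rfb gf g \<gamma> x = (1 / \<gamma>) *\<^sub>R (x - Tfb gf g \<gamma> x)"

definition FBE :: "('a::real_inner \<Rightarrow> real) \<Rightarrow> ('a \<Rightarrow> 'a) \<Rightarrow> ('a \<Rightarrow> ereal) \<Rightarrow> real \<Rightarrow> 'a \<Rightarrow> ereal" where
  "FBE f gf g \<gamma> x = (INF u. ereal (f x + gf x \<bullet> (u - x) + (norm (u - x))\<^sup>2 / (2 * \<gamma>)) + g u)"

text \<open>Steps (2)-(3) of MINFBE at stepsize gamma from point xk: w is admissible if
  w = xk + tau d with tau >= 0, d a non-ascent direction of the FBE (i.e. <d, grad FBE(xk)> <= 0,
  the gradient being the Frechet derivative of the real-valued FBE), and FBE(w) <= FBE(xk).\<close>
definition minfbe_admissible ::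
  "('a::real_inner \<Rightarrow> real) \<Rightarrow> ('a \<Rightarrow> 'a) \<Rightarrow> ('a \<Rightarrow> ereal) \<Rightarrow> real \<Rightarrow> 'a \<Rightarrow> 'a \<Rightarrow> bool" where
  "minfbe_admissible f gf g \<gamma> xk w \<longleftrightarrow>
     (\<exists>d \<tau>. \<tau> \<ge> 0 \<and> w = xk + \<tau> *\<^sub>R d \<and>
        (\<forall>D. ((\<lambda>y. real_of_ereal (FBE f gf g \<gamma> y)) has_derivative D) (at xk) \<longrightarrow> D d \<le> 0) \<and>
        FBE f gf g \<gamma> w \<le> FBE f gf g \<gamma> xk)"

definition minfbe_accept ::
  "('a::real_inner \<Rightarrow> real) \<Rightarrow> ('a \<Rightarrow> 'a) \<Rightarrow> ('a \<Rightarrow> ereal) \<Rightarrow> real \<Rightarrow> real \<Rightarrow> 'a \<Rightarrow> bool" where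
  "minfbe_accept f gf g \<beta> \<gamma> w \<longleftrightarrow>
     f (Tfb gf g \<gamma> w) \<le> f w - \<gamma> * (gf w \<bullet> Rfb gf g \<gamma> w)
                        + (1 - \<beta>) * \<gamma> / 2 * (norm (Rfb gf g \<gamma> w))\<^sup>2"

text \<open>(x, w, gamma) are (infinite) sequences generated by MINFBE with parameters gamma0, xi, beta.
  gamma k is the accepted stepsize at iteration k; it arises from the previous stepsize
  (gamma0 for k = 0) by m backtracking reductions, each triggered by a rejected admissible
  trial point.\<close>
definition minfbe_seq ::
  "('a::real_inner \<Rightarrow> real) \<Rightarrow> ('a \<Rightarrow> 'a) \<Rightarrow> ('a \<Rightarrow> ereal) \<Rightarrow> real \<Rightarrow> real \<Rightarrow> real \<Rightarrow>
   (nat \<Rightarrow> 'a) \<Rightarrow> (nat \<Rightarrow> 'a) \<Rightarrow> (nat \<Rightarrow> real) \<Rightarrow> bool" where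
  "minfbe_seq f gf g \<gamma>0 \<xi> \<beta> x w \<gamma> \<longleftrightarrow>
    (\<forall>k. let \<gamma>p = (if k = 0 then \<gamma>0 else \<gamma> (k - 1)) in
       (\<exists>m::nat. \<gamma> k = \<xi> ^ m * \<gamma>p \<and>
          (\<forall>l<m. \<exists>w'. minfbe_admissible f gf g (\<xi> ^ l * \<gamma>p) (x k) w' \<and>
                        \<not> minfbe_accept f gf g \<beta> (\<xi> ^ l * \<gamma>p) w')) \<and>
       minfbe_admissible f gf g (\<gamma> k) (x k) (w k) \<and>
       minfbe_accept f gf g \<beta> (\<gamma> k) (w k) \<and>
       x (Suc k) = Tfb gf g (\<gamma> k) (w k))"

end

theory Submission
  imports Defs
begin


lemma norm_comb_identity:
  fixes a b :: "'a::real_inner"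
  shows "l * (norm a)\<^sup>2 + (1-l) * (norm b)\<^sup>2 - (norm (l *\<^sub>R a + (1-l) *\<^sub>R b))\<^sup>2
         = l * (1-l) * (norm (a - b))\<^sup>2"
  unfolding power2_norm_eq_inner
  by (simp add: inner_add_left inner_add_right inner_diff_left inner_diff_right inner_commute algebra_simps)

lemma wc_ineq:
  fixes g :: "'a::real_inner \<Rightarrow> ereal"
  assumes wc: "weakly_convex M g" and ga: "g a = ereal ga" and gb: "g b = ereal gb"
    and l: "0 \<le> l" "l \<le> 1"
  shows "g (l *\<^sub>R a + (1-l) *\<^sub>R b) \<le> ereal (l*ga + (1-l)*gb + M/2*l*(1-l)*(norm(a-b))\<^sup>2)"
proof -
  let ?E = "{(x, t::real). g x + ereal (M / 2 * (norm x)\<^sup>2) \<le> ereal t}"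
  have cv: "convex ?E" using wc unfolding weakly_convex_def convex_fun_def by simp
  have A: "(a, ga + M/2*(norm a)\<^sup>2) \<in> ?E" using ga by simp
  have B: "(b, gb + M/2*(norm b)\<^sup>2) \<in> ?E" using gb by simp
  have "l *\<^sub>R (a, ga + M/2*(norm a)\<^sup>2) + (1-l) *\<^sub>R (b, gb + M/2*(norm b)\<^sup>2) \<in> ?E"
    using convexD[OF cv A B, of l "1-l"] l by simp
  then have C: "g (l *\<^sub>R a + (1-l) *\<^sub>R b) + ereal (M/2 * (norm (l *\<^sub>R a + (1-l) *\<^sub>R b))\<^sup>2)
      \<le> ereal (l * (ga + M/2*(norm a)\<^sup>2) + (1-l) * (gb + M/2*(norm b)\<^sup>2))" by simp
  have eq: "l * (ga + M/2*(norm a)\<^sup>2) + (1-l) * (gb + M/2*(norm b)\<^sup>2) - M/2 * (norm (l *\<^sub>R a + (1-l) *\<^sub>R b))\<^sup>2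
     = l*ga + (1-l)*gb + M/2*l*(1-l)*(norm(a-b))\<^sup>2"
  proof -
    have nz: "(norm (l *\<^sub>R a + (1-l) *\<^sub>R b))\<^sup>2 = l * (norm a)\<^sup>2 + (1-l) * (norm b)\<^sup>2 - l * (1-l) * (norm (a - b))\<^sup>2"
      using norm_comb_identity[of l a b] by linarith
    show ?thesis unfolding nz by (simp add: field_simps)
  qed
  show ?thesis
    using C unfolding eq[symmetric]
    by (cases "g (l *\<^sub>R a + (1-l) *\<^sub>R b)") auto
qed

lemma closed_epi_plus:
  fixes g :: "'a::real_normed_vector \<Rightarrow> ereal"
  assumes "closed_fun g" "continuous_on UNIV q" "\<forall>x. g x \<noteq> -\<infinity>"
  shows "closed {(x, t::real). g x + ereal (q x) \<le> ereal t}"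
proof -
  have eq: "{(x, t::real). g x + ereal (q x) \<le> ereal t}
      = (\<lambda>p. (fst p, snd p - q (fst p))) -` {(x, t::real). g x \<le> ereal t}"
  proof (rule set_eqI, clarsimp)
    fix x t
    show "(g x + ereal (q x) \<le> ereal t) = (g x \<le> ereal (t - q x))"
      using assms(3) by (cases "g x") auto
  qed
  have ct: "\<And>x. isCont q x" using assms(2) by (simp add: continuous_on_eq_continuous_at)
  have ct': "continuous_on UNIV (\<lambda>p::'a\<times>real. (fst p, snd p - q (fst p)))"
    by (intro continuous_on_Pair continuous_on_fst continuous_on_snd continuous_on_diff continuous_on_id
          continuous_on_compose2[OF assms(2)]) auto
  show ?thesis unfolding eq
    apply (rule continuous_closed_vimage)
    using assms(1) apply (simp add: closed_fun_def)
    using ct' continuous_on_eq_continuous_at[OF open_UNIV] by blast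
qed

lemma minorant:
  fixes g :: "'a::euclidean_space \<Rightarrow> ereal"
  assumes pr: "proper_fun g" and cl: "closed_fun g" and wc: "weakly_convex M g"
  shows "\<exists>\<alpha> a. \<forall>x. ereal (\<alpha> - a \<bullet> x - M/2 * (norm x)\<^sup>2) \<le> g x"
proof -
  let ?E = "{(x, t::real). g x + ereal (M/2 * (norm x)\<^sup>2) \<le> ereal t}"
  have ninf: "\<forall>x. g x \<noteq> -\<infinity>" using pr unfolding proper_fun_def by auto
  obtain x1 where "g x1 \<noteq> \<infinity>" using pr unfolding proper_fun_def by auto
  with ninf obtain r where r: "g x1 = ereal r" by (cases "g x1") auto
  have cv: "convex ?E" using wc unfolding weakly_convex_def convex_fun_def by simp
  have clE: "closed ?E" by (rule closed_epi_plus[OF cl _ ninf]) (intro continuous_intros)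
  let ?R = "r + M/2*(norm x1)\<^sup>2"
  have "(x1, ?R - 1) \<notin> ?E" using r by simp
  from separating_hyperplane_closed_point[OF cv clE this]
  obtain A b where Ab: "inner A (x1, ?R - 1) < b" "\<forall>p\<in>?E. inner A p > b" by blast
  obtain a1 s where A: "A = (a1, s)" by (cases A)
  have "(x1, ?R) \<in> ?E" using r by simp
  with Ab A have h1: "a1 \<bullet> x1 + s * (?R - 1) < b" "b < a1 \<bullet> x1 + s * ?R" by auto
  then have s: "s > 0" by (simp add: algebra_simps)
  show ?thesis
  proof (intro exI allI)
    fix x
    show "ereal (b/s - ((1/s) *\<^sub>R a1) \<bullet> x - M/2*(norm x)\<^sup>2) \<le> g x"
    proof (cases "g x")
      case (real gx)
      then have "(x, gx + M/2*(norm x)\<^sup>2) \<in> ?E" by simp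
      with Ab A have "b < a1 \<bullet> x + s * (gx + M/2*(norm x)\<^sup>2)" by auto
      then have "b/s < (a1 \<bullet> x + s * (gx + M/2*(norm x)\<^sup>2)) / s" using s by (simp add: divide_strict_right_mono)
      also have "\<dots> = (a1 \<bullet> x)/s + (gx + M/2*(norm x)\<^sup>2)" using s by (simp add: add_divide_distrib)
      finally have "b/s - (1/s)*(a1\<bullet>x) - M/2*(norm x)\<^sup>2 \<le> gx" by simp
      then show ?thesis using real by simp
    qed (use ninf in auto)
  qed
qed

lemma coercive_aux:
  fixes r mu B D R :: real
  assumes "mu > 0" "B \<ge> 0" "D \<ge> 0" "r \<ge> 0" "mu * r\<^sup>2 - B * r \<le> D"
  shows "r \<le> max 1 ((B + D) / mu)"
proof (rule ccontr)
  assume "\<not> ?thesis"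
  then have r1: "r > 1" and r2: "r > (B + D) / mu" by auto
  then have "mu * r > B + D" using assms(1) by (simp add: pos_divide_less_eq mult.commute)
  then have "mu * r * r > (B + D) * r" using r1 by (simp add: mult_strict_right_mono)
  moreover have "(B + D) * r \<ge> B * r + D" using r1 assms(3) by (simp add: distrib_right mult_le_cancel_left1)
  ultimately show False using assms(5) by (simp add: power2_eq_square)
qed

lemma prox_exists:
  fixes g :: "'a::euclidean_space \<Rightarrow> ereal"
  assumes pr: "proper_fun g" and cl: "closed_fun g" and wc: "weakly_convex M g"
    and M: "M > 0" and gam: "\<gamma> > 0" "\<gamma> * M < 1"
  shows "\<exists>p. g p \<noteq> \<infinity> \<and> (\<forall>v. g p + ereal ((norm (p - y))\<^sup>2 / (2 * \<gamma>)) \<le> g v + ereal ((norm (v - y))\<^sup>2 / (2 * \<gamma>)))"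
proof -
  have ninf: "\<forall>x. g x \<noteq> -\<infinity>" using pr unfolding proper_fun_def by auto
  obtain x1 where "g x1 \<noteq> \<infinity>" using pr unfolding proper_fun_def by auto
  with ninf obtain r where r: "g x1 = ereal r" by (cases "g x1") auto
  obtain \<alpha> a where mn: "\<forall>x. ereal (\<alpha> - a \<bullet> x - M/2 * (norm x)\<^sup>2) \<le> g x"
    using minorant[OF pr cl wc] by blast
  define h where "h u = g u + ereal ((norm (u - y))\<^sup>2 / (2 * \<gamma>))" for u
  define K where "K = r + (norm (x1 - y))\<^sup>2 / (2 * \<gamma>)"
  define S where "S = {(u, t). h u \<le> ereal t \<and> t \<le> K}"
  have "S = {(u, t). g u + ereal ((norm (u - y))\<^sup>2 / (2 * \<gamma>)) \<le> ereal t} \<inter> {p. snd p \<le> K}"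
    unfolding S_def h_def by auto
  moreover have "closed {(u, t::real). g u + ereal ((norm (u - y))\<^sup>2 / (2 * \<gamma>)) \<le> ereal t}"
    by (rule closed_epi_plus[OF cl _ ninf]) (intro continuous_intros, use gam in auto)
  moreover have "closed {p::'a\<times>real. snd p \<le> K}"
    by (rule closed_Collect_le) (intro continuous_intros)+
  ultimately have clS: "closed S" by auto
  define mu where "mu = 1 / (2 * \<gamma>) - M / 2"
  have mu: "mu > 0" using gam unfolding mu_def by (simp add: field_simps)
  define B where "B = norm a + norm y / \<gamma>"
  define D where "D = \<bar>K - \<alpha>\<bar>"
  define R where "R = max 1 ((B + D) / mu)"
  have B0: "B \<ge> 0" unfolding B_def using gam by simp
  have low: "\<alpha> - norm a * norm u - M/2 * (norm u)\<^sup>2 \<le> t \<and> mu * (norm u)\<^sup>2 - B * norm u \<le> D"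
    if "(u, t) \<in> S" for u t
  proof -
    from that have ht: "h u \<le> ereal t" and tK: "t \<le> K" unfolding S_def by auto
    then obtain gu where gu: "g u = ereal gu" using ninf unfolding h_def by (cases "g u") auto
    have t1: "gu + (norm (u - y))\<^sup>2 / (2 * \<gamma>) \<le> t" using ht gu unfolding h_def by simp
    have t2: "\<alpha> - a \<bullet> u - M/2 * (norm u)\<^sup>2 \<le> gu" using mn gu by (metis ereal_less_eq(3))
    have q2: "a \<bullet> u \<le> norm a * norm u" by (rule norm_cauchy_schwarz)
    have q3: "u \<bullet> y \<le> norm u * norm y" by (rule norm_cauchy_schwarz)
    have q1: "(norm (u - y))\<^sup>2 = (norm u)\<^sup>2 - 2 * (u \<bullet> y) + (norm y)\<^sup>2"
      unfolding power2_norm_eq_inner by (simp add: inner_diff_left inner_diff_right inner_commute)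
    have q4: "(norm (u - y))\<^sup>2 / (2 * \<gamma>) \<ge> ((norm u)\<^sup>2 - 2 * (norm u * norm y)) / (2 * \<gamma>)"
    proof (rule divide_right_mono)
      have "(norm y)\<^sup>2 \<ge> 0" by simp
      then show "(norm u)\<^sup>2 - 2 * (norm u * norm y) \<le> (norm (u - y))\<^sup>2" using q1 q3 by linarith
    qed (use gam in simp)
    have q5: "((norm u)\<^sup>2 - 2 * (norm u * norm y)) / (2 * \<gamma>) = (norm u)\<^sup>2 / (2*\<gamma>) - norm u * (norm y / \<gamma>)"
      using gam by (simp add: field_simps)
    have q6: "(norm u)\<^sup>2 / (2*\<gamma>) - M/2 * (norm u)\<^sup>2 = mu * (norm u)\<^sup>2"
      unfolding mu_def by (simp add: algebra_simps)
    have "(norm (u - y))\<^sup>2 / (2 * \<gamma>) \<ge> 0" using gam by simp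
    moreover have "B * norm u = norm a * norm u + norm u * (norm y / \<gamma>)"
      unfolding B_def by (simp add: algebra_simps)
    moreover have "K - \<alpha> \<le> D" unfolding D_def by simp
    ultimately show ?thesis using t1 t2 q2 q4 q5 q6 tK by linarith
  qed
  have nb: "norm u \<le> R" if "(u, t) \<in> S" for u t
  proof -
    have "D \<ge> 0" unfolding D_def by simp
    then show ?thesis unfolding R_def using low[OF that] coercive_aux[OF mu B0 _ norm_ge_zero, of D u] by blast
  qed
  define T where "T = \<bar>K\<bar> + \<bar>\<alpha>\<bar> + norm a * R + M/2 * R\<^sup>2"
  have tb: "\<bar>t\<bar> \<le> T" if "(u, t) \<in> S" for u t
  proof -
    have "norm a * norm u \<le> norm a * R" using nb[OF that] by (simp add: mult_left_mono)
    moreover have "(norm u)\<^sup>2 \<le> R\<^sup>2" using nb[OF that] by (simp add: power_mono)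
    then have "M/2 * (norm u)\<^sup>2 \<le> M/2 * R\<^sup>2" using M by simp
    moreover have "t \<le> K" using that unfolding S_def by auto
    moreover have "R \<ge> 0" unfolding R_def by simp
    then have "norm a * R \<ge> 0" "M/2 * R\<^sup>2 \<ge> 0" using M by auto
    ultimately show ?thesis using low[OF that] unfolding T_def abs_le_iff by (auto; linarith)
  qed
  have "bounded S" unfolding bounded_iff
  proof (intro exI ballI)
    fix p assume "p \<in> S"
    moreover obtain u t where "p = (u, t)" by (cases p)
    ultimately have "p = (u,t)" "(u,t) \<in> S" by auto
    then show "norm p \<le> R + T" using norm_Pair_le[of u t] nb tb by fastforce
  qed
  with clS have cS: "compact S" by (simp add: compact_eq_bounded_closed)
  have x1S: "(x1, K) \<in> S" unfolding S_def h_def K_def using r by simp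
  obtain pt where pt: "pt \<in> S" "\<forall>q\<in>S. snd pt \<le> snd q"
    using continuous_attains_inf[OF cS _ continuous_on_snd[OF continuous_on_id]] x1S by blast
  obtain p tp where ptp: "pt = (p, tp)" by (cases pt)
  have hp: "h p \<le> ereal tp" and tpK: "tp \<le> K" using pt ptp unfolding S_def by auto
  have "h p \<le> h v" for v
  proof (cases "h v \<le> ereal K")
    case True
    then obtain hv where hv: "h v = ereal hv" using ninf unfolding h_def by (cases "g v") auto
    then have "(v, hv) \<in> S" using True unfolding S_def by simp
    then have "tp \<le> hv" using pt ptp by force
    then show ?thesis using hp hv by (simp add: order_trans)
  next
    case False
    then show ?thesis using hp tpK by (meson ereal_less_eq(3) linear order_trans)
  qed
  moreover have "g p \<noteq> \<infinity>" using hp unfolding h_def by auto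
  ultimately show ?thesis unfolding h_def by blast
qed

lemma lin_aux: fixes A B C E Zt gp gq :: real
  shows "Zt = A/2 + B/2 - C \<Longrightarrow> gp + A \<le> gq + B \<Longrightarrow> gq + B \<le> gp + A
      \<Longrightarrow> gp + A \<le> 1/2*gp + (1-1/2)*gq + E + Zt \<Longrightarrow> 0 \<le> E - C" by (simp add: field_simps)

lemma prox_unique:
  fixes g :: "'a::real_inner \<Rightarrow> ereal"
  assumes wc: "weakly_convex M g" and gam: "\<gamma> > 0" "\<gamma> * M < 1"
    and gp: "g p = ereal gp" and gq: "g q = ereal gq"
    and minp: "\<forall>v. g p + ereal ((norm (p - y))\<^sup>2 / (2 * \<gamma>)) \<le> g v + ereal ((norm (v - y))\<^sup>2 / (2 * \<gamma>))"
    and minq: "\<forall>v. g q + ereal ((norm (q - y))\<^sup>2 / (2 * \<gamma>)) \<le> g v + ereal ((norm (v - y))\<^sup>2 / (2 * \<gamma>))"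
  shows "p = q"
proof -
  define z where "z = (1/2::real) *\<^sub>R p + (1 - 1/2::real) *\<^sub>R q"
  define P where "P = (norm (p - y))\<^sup>2"
  define Q where "Q = (norm (q - y))\<^sup>2"
  define Z where "Z = (norm (z - y))\<^sup>2"
  define d where "d = (norm (p - q))\<^sup>2"
  have gz: "g z \<le> ereal ((1/2)*gp + (1-1/2)*gq + M/2*(1/2)*(1-1/2)*d)"
    unfolding z_def d_def using wc_ineq[OF wc gp gq, of "1/2"] by simp
  have e1: "gp + P/(2*\<gamma>) \<le> gq + Q/(2*\<gamma>)" using minp[rule_format, of q] gp gq unfolding P_def Q_def by simp
  have e2: "gq + Q/(2*\<gamma>) \<le> gp + P/(2*\<gamma>)" using minq[rule_format, of p] gp gq unfolding P_def Q_def by simp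
  have "ereal (gp + P/(2*\<gamma>)) \<le> g z + ereal (Z/(2*\<gamma>))"
    using minp[rule_format, of z] gp unfolding P_def Z_def by simp
  also have "\<dots> \<le> ereal ((1/2)*gp + (1-1/2)*gq + M/2*(1/2)*(1-1/2)*d + Z/(2*\<gamma>))"
    using gz by (cases "g z") auto
  finally have e3: "gp + P/(2*\<gamma>) \<le> (1/2)*gp + (1-1/2)*gq + M/2*(1/2)*(1-1/2)*d + Z/(2*\<gamma>)" by simp
  have "z - y = (1/2::real) *\<^sub>R (p - y) + (1 - 1/2::real) *\<^sub>R (q - y)"
    unfolding z_def by (simp add: algebra_simps flip: scaleR_add_left)
  then have "Z = P/2 + Q/2 - d/4"
    using norm_comb_identity[of "1/2" "p - y" "q - y"] unfolding Z_def P_def Q_def d_def by simp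
  then have "Z/(2*\<gamma>) = (P/2 + Q/2 - d/4)/(2*\<gamma>)" by simp
  also have "\<dots> = (P/(2*\<gamma>))/2 + (Q/(2*\<gamma>))/2 - d/(8*\<gamma>)" by (simp add: diff_divide_distrib add_divide_distrib)
  finally have Zeq: "Z/(2*\<gamma>) = (P/(2*\<gamma>))/2 + (Q/(2*\<gamma>))/2 - d/(8*\<gamma>)" .
  have "0 \<le> M/2*(1/2)*(1-1/2)*d - d/(8*\<gamma>)"
    by (rule lin_aux[OF Zeq e1 e2 e3])
  then have "0 \<le> M/8*d - d/(8*\<gamma>)" by simp
  then have "0 \<le> 8*\<gamma>*(M/8*d - d/(8*\<gamma>))" using gam by simp
  also have "8*\<gamma>*(M/8*d - d/(8*\<gamma>)) = d * (\<gamma>*M - 1)" using gam by (simp add: field_simps)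
  finally have "d \<le> 0" using gam by (simp add: zero_le_mult_iff)
  then show ?thesis unfolding d_def by simp
qed

lemma prox_prop:
  fixes g :: "'a::euclidean_space \<Rightarrow> ereal"
  assumes pr: "proper_fun g" and cl: "closed_fun g" and wc: "weakly_convex M g"
    and M: "M > 0" and gam: "\<gamma> > 0" "\<gamma> * M < 1"
  shows "g (prox g \<gamma> y) \<noteq> \<infinity> \<and> (\<forall>v. g (prox g \<gamma> y) + ereal ((norm (prox g \<gamma> y - y))\<^sup>2 / (2 * \<gamma>))
            \<le> g v + ereal ((norm (v - y))\<^sup>2 / (2 * \<gamma>)))"
proof -
  have ninf: "\<forall>x. g x \<noteq> -\<infinity>" using pr unfolding proper_fun_def by auto
  obtain p where p: "g p \<noteq> \<infinity>" "\<forall>v. g p + ereal ((norm (p - y))\<^sup>2 / (2 * \<gamma>)) \<le> g v + ereal ((norm (v - y))\<^sup>2 / (2 * \<gamma>))"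
    using prox_exists[OF pr cl wc M gam] by blast
  obtain gp where gp: "g p = ereal gp" using p(1) ninf by (cases "g p") auto
  have ex1: "\<exists>!u. \<forall>v. g u + ereal ((norm (u - y))\<^sup>2 / (2 * \<gamma>)) \<le> g v + ereal ((norm (v - y))\<^sup>2 / (2 * \<gamma>))"
  proof (rule ex1I[of _ p])
    show "\<forall>v. g p + ereal ((norm (p - y))\<^sup>2 / (2 * \<gamma>)) \<le> g v + ereal ((norm (v - y))\<^sup>2 / (2 * \<gamma>))" by (rule p(2))
  next
    fix u assume u: "\<forall>v. g u + ereal ((norm (u - y))\<^sup>2 / (2 * \<gamma>)) \<le> g v + ereal ((norm (v - y))\<^sup>2 / (2 * \<gamma>))"
    have "g u \<noteq> \<infinity>"
    proof
      assume "g u = \<infinity>"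
      then show False using u[rule_format, of p] gp by simp
    qed
    then obtain gu where gu: "g u = ereal gu" using ninf by (cases "g u") auto
    show "u = p" by (rule prox_unique[OF wc gam gu gp u p(2)])
  qed
  have P: "\<forall>v. g (prox g \<gamma> y) + ereal ((norm (prox g \<gamma> y - y))\<^sup>2 / (2 * \<gamma>)) \<le> g v + ereal ((norm (v - y))\<^sup>2 / (2 * \<gamma>))"
    unfolding prox_def by (rule theI'[OF ex1])
  moreover have "g (prox g \<gamma> y) \<noteq> \<infinity>"
  proof
    assume "g (prox g \<gamma> y) = \<infinity>"
    then show False using P[rule_format, of p] gp by simp
  qed
  ultimately show ?thesis by blast
qed

lemma norm_shift_div:
  fixes u x v :: "'a::real_inner"
  assumes gam: "\<gamma> > 0"
  shows "(norm (u - (x - \<gamma> *\<^sub>R v)))\<^sup>2 / (2*\<gamma>) = (norm (u - x))\<^sup>2 / (2*\<gamma>) + v \<bullet> (u - x) + \<gamma>/2 * (norm v)\<^sup>2"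
proof -
  have "u - (x - \<gamma> *\<^sub>R v) = (u - x) + \<gamma> *\<^sub>R v" by (simp add: algebra_simps)
  then have "(norm (u - (x - \<gamma> *\<^sub>R v)))\<^sup>2 = (norm (u - x))\<^sup>2 + 2*\<gamma>*(v \<bullet> (u - x)) + \<gamma>\<^sup>2*(norm v)\<^sup>2"
    unfolding power2_norm_eq_inner
    by (simp add: inner_add_left inner_add_right inner_commute power2_eq_square algebra_simps)
  then show ?thesis using gam by (simp add: field_simps power2_eq_square)
qed

lemma lim_aux:
  fixes X C :: real
  assumes "\<And>l. 0 < l \<Longrightarrow> l \<le> 1 \<Longrightarrow> X \<le> l * C"
  shows "X \<le> 0"
proof (rule ccontr)
  assume "\<not> X \<le> 0"
  then have X: "X > 0" by simp
  define l where "l = min 1 (X / (2 * (\<bar>C\<bar> + 1)))"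
  have l0: "l > 0" unfolding l_def using X by simp
  have l1: "l \<le> 1" unfolding l_def by simp
  have "l * C \<le> l * \<bar>C\<bar>" using l0 by (simp add: mult_left_mono)
  also have "\<dots> \<le> X / (2 * (\<bar>C\<bar> + 1)) * \<bar>C\<bar>"
  proof (rule mult_right_mono)
    show "l \<le> X / (2 * (\<bar>C\<bar> + 1))" unfolding l_def by (rule min.cobounded2)
  qed simp
  also have "\<dots> < X"
  proof -
    have "X / (2 * (\<bar>C\<bar> + 1)) * \<bar>C\<bar> = X * (\<bar>C\<bar> / (2 * (\<bar>C\<bar> + 1)))" by simp
    also have "\<dots> < X * 1"
      using X by (intro mult_strict_left_mono) (auto simp: divide_less_eq)
    finally show ?thesis by simp
  qed
  finally show False using assms[OF l0 l1] by simp
qed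

lemma key_C:
  fixes g :: "'a::real_inner \<Rightarrow> ereal"
  assumes wc: "weakly_convex M g" and gam: "\<gamma> > 0"
    and gx: "g x = ereal gx" and gp: "g p = ereal gp"
    and minp: "\<forall>u. g p + ereal ((norm (p - (x - \<gamma> *\<^sub>R v)))\<^sup>2 / (2 * \<gamma>)) \<le> g u + ereal ((norm (u - (x - \<gamma> *\<^sub>R v)))\<^sup>2 / (2 * \<gamma>))"
  shows "gp + v \<bullet> (p - x) + (norm (p - x))\<^sup>2/(2*\<gamma>) + (\<gamma> - M*\<gamma>\<^sup>2)/2 * (norm ((1/\<gamma>) *\<^sub>R (x - p)))\<^sup>2 \<le> gx"
proof -
  define d where "d = (norm (p - x))\<^sup>2"
  define e where "e = v \<bullet> (p - x)"
  define q where "q = d / (2*\<gamma>)"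
  define K0 where "K0 = \<gamma>/2 * (norm v)\<^sup>2"
  define X where "X = gp + e + 2*q - M/2*d - gx"
  define C where "C = q - M/2*d"
  have "X \<le> l * C" if l: "0 < l" "l \<le> 1" for l
  proof -
    define z where "z = l *\<^sub>R x + (1-l) *\<^sub>R p"
    have gz: "g z \<le> ereal (l*gx + (1-l)*gp + M/2*l*(1-l)*d)"
      unfolding z_def d_def using wc_ineq[OF wc gx gp, of l] l by (simp add: norm_minus_commute)
    have zx: "z - x = (1-l) *\<^sub>R (p - x)" unfolding z_def by (simp add: algebra_simps)
    have nz: "(norm (z - x))\<^sup>2 / (2*\<gamma>) = (1-l)\<^sup>2 * q"
      unfolding zx q_def d_def by (simp add: power_mult_distrib)
    have ez: "v \<bullet> (z - x) = (1-l) * e" unfolding zx e_def by simp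
    have "ereal (gp + (q + e + K0)) \<le> g z + ereal ((1-l)\<^sup>2 * q + (1-l)*e + K0)"
      using minp[rule_format, of z] gp norm_shift_div[OF gam, of p x v] norm_shift_div[OF gam, of z x v] nz ez
      unfolding q_def d_def e_def K0_def by simp
    also have "\<dots> \<le> ereal (l*gx + (1-l)*gp + M/2*l*(1-l)*d + ((1-l)\<^sup>2 * q + (1-l)*e + K0))"
      using gz by (cases "g z") auto
    finally have st: "gp + (q + e + K0) \<le> l*gx + (1-l)*gp + M/2*l*(1-l)*d + ((1-l)\<^sup>2 * q + (1-l)*e + K0)"
      by simp
    have "l*X - l*(l*C) = (gp + (q + e + K0)) - (l*gx + (1-l)*gp + M/2*l*(1-l)*d + ((1-l)\<^sup>2 * q + (1-l)*e + K0))"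
      unfolding X_def C_def by (simp add: field_simps power2_eq_square)
    with st have "l * X \<le> l * (l * C)" by linarith
    with l show ?thesis by simp
  qed
  then have "X \<le> 0" by (rule lim_aux)
  moreover have "(\<gamma> - M*\<gamma>\<^sup>2)/2 * (norm ((1/\<gamma>) *\<^sub>R (x - p)))\<^sup>2 = q - M/2*d"
  proof -
    have nr: "(norm ((1/\<gamma>) *\<^sub>R (x - p)))\<^sup>2 = d / \<gamma>\<^sup>2"
      unfolding d_def using gam by (simp add: power_mult_distrib power_divide norm_minus_commute)
    show ?thesis unfolding nr q_def using gam by (simp add: field_simps power2_eq_square)
  qed
  ultimately show ?thesis unfolding X_def e_def[symmetric] d_def[symmetric] q_def[symmetric] by linarith
qed

lemma FBE_eq:
  fixes g :: "'a::euclidean_space \<Rightarrow> ereal"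
  assumes pr: "proper_fun g" and cl: "closed_fun g" and wc: "weakly_convex M g"
    and M: "M > 0" and gam: "\<gamma> > 0" "\<gamma> * M < 1"
  shows "\<exists>gp. g (Tfb gf g \<gamma> x) = ereal gp \<and>
     FBE f gf g \<gamma> x = ereal (f x + gf x \<bullet> (Tfb gf g \<gamma> x - x) + (norm (Tfb gf g \<gamma> x - x))\<^sup>2/(2*\<gamma>) + gp) \<and>
     (\<forall>u. g (Tfb gf g \<gamma> x) + ereal ((norm (Tfb gf g \<gamma> x - (x - \<gamma> *\<^sub>R gf x)))\<^sup>2/(2*\<gamma>))
        \<le> g u + ereal ((norm (u - (x - \<gamma> *\<^sub>R gf x)))\<^sup>2/(2*\<gamma>)))"
proof -
  have ninf: "\<forall>x. g x \<noteq> -\<infinity>" using pr unfolding proper_fun_def by auto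
  define p where "p = Tfb gf g \<gamma> x"
  define y where "y = x - \<gamma> *\<^sub>R gf x"
  have pp: "p = prox g \<gamma> y" unfolding p_def y_def Tfb_def by simp
  have P: "g p \<noteq> \<infinity>" "\<forall>v. g p + ereal ((norm (p - y))\<^sup>2 / (2 * \<gamma>)) \<le> g v + ereal ((norm (v - y))\<^sup>2 / (2 * \<gamma>))"
    using prox_prop[OF pr cl wc M gam, of y] unfolding pp by auto
  obtain gp where gp: "g p = ereal gp" using P(1) ninf by (cases "g p") auto
  have "FBE f gf g \<gamma> x = ereal (f x + gf x \<bullet> (p - x) + (norm (p - x))\<^sup>2/(2*\<gamma>) + gp)"
    unfolding FBE_def
  proof (rule antisym)
    show "(INF u. ereal (f x + gf x \<bullet> (u - x) + (norm (u - x))\<^sup>2 / (2 * \<gamma>)) + g u)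
        \<le> ereal (f x + gf x \<bullet> (p - x) + (norm (p - x))\<^sup>2 / (2 * \<gamma>) + gp)"
      by (rule INF_lower2[of p]) (simp_all add: gp)
    show "ereal (f x + gf x \<bullet> (p - x) + (norm (p - x))\<^sup>2 / (2 * \<gamma>) + gp)
        \<le> (INF u. ereal (f x + gf x \<bullet> (u - x) + (norm (u - x))\<^sup>2 / (2 * \<gamma>)) + g u)"
    proof (rule INF_greatest)
      fix u
      show "ereal (f x + gf x \<bullet> (p - x) + (norm (p - x))\<^sup>2 / (2 * \<gamma>) + gp)
          \<le> ereal (f x + gf x \<bullet> (u - x) + (norm (u - x))\<^sup>2 / (2 * \<gamma>)) + g u"
      proof (cases "g u")
        case (real gu)
        have "gp + (norm (p - y))\<^sup>2 / (2 * \<gamma>) \<le> gu + (norm (u - y))\<^sup>2 / (2 * \<gamma>)"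
          using P(2)[rule_format, of u] gp real by simp
        then show ?thesis using real norm_shift_div[OF gam(1), of p x "gf x"] norm_shift_div[OF gam(1), of u x "gf x"]
          unfolding y_def by simp
      qed (use ninf in auto)
    qed
  qed
  then show ?thesis using gp P(2) unfolding p_def y_def by blast
qed

lemma descent:
  fixes f :: "'a::real_inner \<Rightarrow> real"
  assumes fd: "\<And>y. (f has_derivative (\<lambda>h. gf y \<bullet> h)) (at y)" and lip: "L-lipschitz_on UNIV gf"
  shows "f y \<le> f x + gf x \<bullet> (y - x) + L/2 * (norm (y - x))\<^sup>2"
proof -
  define d where "d = y - x"
  define \<phi> where "\<phi> t = f (x + t *\<^sub>R d) - t * (gf x \<bullet> d) - L/2 * t\<^sup>2 * (norm d)\<^sup>2" for t
  have der: "(\<phi> has_real_derivative (gf (x + t *\<^sub>R d) \<bullet> d - gf x \<bullet> d - L * t * (norm d)\<^sup>2)) (at t)" for t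
  proof -
    have i: "((\<lambda>t. x + t *\<^sub>R d) has_derivative (\<lambda>h. h *\<^sub>R d)) (at t)"
      by (auto intro!: derivative_eq_intros)
    have c: "((\<lambda>t. f (x + t *\<^sub>R d)) has_derivative (\<lambda>h. gf (x + t *\<^sub>R d) \<bullet> (h *\<^sub>R d))) (at t)"
      using has_derivative_compose[OF i fd] .
    have c2: "((\<lambda>t. f (x + t *\<^sub>R d)) has_real_derivative (gf (x + t *\<^sub>R d) \<bullet> d)) (at t)"
    proof -
      have "(\<lambda>h. gf (x + t *\<^sub>R d) \<bullet> (h *\<^sub>R d)) = (*) (gf (x + t *\<^sub>R d) \<bullet> d)" by (auto simp: fun_eq_iff)
      then show ?thesis unfolding has_field_derivative_def using c by simp
    qed
    show ?thesis unfolding \<phi>_def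
      by (rule derivative_eq_intros c2 refl | simp)+
  qed
  have "\<phi> 1 \<le> \<phi> 0"
  proof (rule DERIV_nonpos_imp_nonincreasing[of 0 1])
    fix t :: real assume t: "0 \<le> t" "t \<le> 1"
    have "gf (x + t *\<^sub>R d) \<bullet> d - gf x \<bullet> d = (gf (x + t *\<^sub>R d) - gf x) \<bullet> d" by (simp add: inner_diff_left)
    also have "\<dots> \<le> norm (gf (x + t *\<^sub>R d) - gf x) * norm d" by (rule norm_cauchy_schwarz)
    also have "\<dots> \<le> (L * norm (t *\<^sub>R d)) * norm d"
    proof (rule mult_right_mono)
      have "dist (gf (x + t *\<^sub>R d)) (gf x) \<le> L * dist (x + t *\<^sub>R d) x"
        using lipschitz_onD[OF lip] by blast
      then show "norm (gf (x + t *\<^sub>R d) - gf x) \<le> L * norm (t *\<^sub>R d)" by (simp add: dist_norm)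
    qed simp
    also have "\<dots> = L * t * (norm d)\<^sup>2" using t by (simp add: power2_eq_square)
    finally show "\<exists>y. (\<phi> has_real_derivative y) (at t) \<and> y \<le> 0" using der[of t] by (intro exI[of _ "gf (x + t *\<^sub>R d) \<bullet> d - gf x \<bullet> d - L * t * (norm d)\<^sup>2"]) auto
  qed simp
  then show ?thesis unfolding \<phi>_def d_def by simp
qed

lemma accept_small:
  fixes f :: "'a::real_inner \<Rightarrow> real"
  assumes fd: "\<And>y. (f has_derivative (\<lambda>h. gf y \<bullet> h)) (at y)" and lip: "L-lipschitz_on UNIV gf"
    and L: "L > 0" and gam: "0 < \<gamma>" "\<gamma> \<le> (1 - \<beta>) / L"
  shows "minfbe_accept f gf g \<beta> \<gamma> w"
proof -
  define p where "p = Tfb gf g \<gamma> w"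
  define R where "R = (1/\<gamma>) *\<^sub>R (w - p)"
  have pw: "p - w = - (\<gamma> *\<^sub>R R)" unfolding R_def using gam by simp
  have d: "f p \<le> f w + gf w \<bullet> (p - w) + L/2 * (norm (p - w))\<^sup>2" by (rule descent[OF fd lip])
  have e1: "gf w \<bullet> (p - w) = - \<gamma> * (gf w \<bullet> R)" unfolding pw by simp
  have e2: "(norm (p - w))\<^sup>2 = \<gamma>\<^sup>2 * (norm R)\<^sup>2" unfolding pw using gam by (simp add: power_mult_distrib)
  have "L * \<gamma> \<le> 1 - \<beta>" using gam L by (simp add: pos_le_divide_eq mult.commute)
  then have "L * \<gamma> * (\<gamma> * (norm R)\<^sup>2) \<le> (1 - \<beta>) * (\<gamma> * (norm R)\<^sup>2)"
    using gam by (intro mult_right_mono) auto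
  then have "L/2 * (\<gamma>\<^sup>2 * (norm R)\<^sup>2) \<le> (1 - \<beta>) * \<gamma> / 2 * (norm R)\<^sup>2"
    by (simp add: power2_eq_square algebra_simps)
  moreover have "f p \<le> f w + - \<gamma> * (gf w \<bullet> R) + L/2 * (\<gamma>\<^sup>2 * (norm R)\<^sup>2)" using d unfolding e1 e2 .
  ultimately show ?thesis unfolding minfbe_accept_def Rfb_def p_def[symmetric] R_def[symmetric] by linarith
qed

lemma iter_step:
  fixes g :: "'a::euclidean_space \<Rightarrow> ereal"
  assumes pr: "proper_fun g" and cl: "closed_fun g" and wc: "weakly_convex M g"
    and M: "M > 0" and gam: "\<gamma> > 0" "\<gamma> * M < 1"
    and adm: "minfbe_admissible f gf g \<gamma> x w" and acc: "minfbe_accept f gf g \<beta> \<gamma> w"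
    and gx: "g x = ereal gx"
  shows "\<exists>gn. g (Tfb gf g \<gamma> w) = ereal gn \<and>
    f (Tfb gf g \<gamma> w) + gn + (\<gamma> - M*\<gamma>\<^sup>2)/2 * (norm (Rfb gf g \<gamma> x))\<^sup>2 + \<beta>*\<gamma>/2*(norm (Rfb gf g \<gamma> w))\<^sup>2 \<le> f x + gx"
proof -
  define pw where "pw = Tfb gf g \<gamma> w"
  define px where "px = Tfb gf g \<gamma> x"
  define Rw where "Rw = Rfb gf g \<gamma> w"
  define Rx where "Rx = Rfb gf g \<gamma> x"
  obtain gpw where gpw: "g pw = ereal gpw"
    and Fw: "FBE f gf g \<gamma> w = ereal (f w + gf w \<bullet> (pw - w) + (norm (pw - w))\<^sup>2/(2*\<gamma>) + gpw)"
    using FBE_eq[OF pr cl wc M gam, of gf w f] unfolding pw_def by blast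
  obtain gpx where gpx: "g px = ereal gpx"
    and Fx: "FBE f gf g \<gamma> x = ereal (f x + gf x \<bullet> (px - x) + (norm (px - x))\<^sup>2/(2*\<gamma>) + gpx)"
    and minx: "\<forall>u. g px + ereal ((norm (px - (x - \<gamma> *\<^sub>R gf x)))\<^sup>2/(2*\<gamma>))
        \<le> g u + ereal ((norm (u - (x - \<gamma> *\<^sub>R gf x)))\<^sup>2/(2*\<gamma>))"
    using FBE_eq[OF pr cl wc M gam, of gf x f] unfolding px_def by blast
  have "FBE f gf g \<gamma> w \<le> FBE f gf g \<gamma> x" using adm unfolding minfbe_admissible_def by blast
  then have F: "f w + gf w \<bullet> (pw - w) + (norm (pw - w))\<^sup>2/(2*\<gamma>) + gpw \<le> f x + gf x \<bullet> (px - x) + (norm (px - x))\<^sup>2/(2*\<gamma>) + gpx"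
    using Fw Fx by simp
  have K: "gpx + gf x \<bullet> (px - x) + (norm (px - x))\<^sup>2/(2*\<gamma>) + (\<gamma> - M*\<gamma>\<^sup>2)/2 * (norm ((1/\<gamma>) *\<^sub>R (x - px)))\<^sup>2 \<le> gx"
    by (rule key_C[OF wc gam(1) gx gpx minx])
  have Rx: "Rx = (1/\<gamma>) *\<^sub>R (x - px)" unfolding Rx_def Rfb_def px_def ..
  have A: "f pw \<le> f w - \<gamma> * (gf w \<bullet> Rw) + (1 - \<beta>) * \<gamma> / 2 * (norm Rw)\<^sup>2"
    using acc unfolding minfbe_accept_def pw_def Rw_def .
  have pwe: "pw - w = - (\<gamma> *\<^sub>R Rw)" unfolding Rw_def Rfb_def pw_def using gam by simp
  have e1: "gf w \<bullet> (pw - w) = - \<gamma> * (gf w \<bullet> Rw)" unfolding pwe by simp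
  have e2: "(norm (pw - w))\<^sup>2/(2*\<gamma>) = \<gamma>/2 * (norm Rw)\<^sup>2" unfolding pwe using gam
    by (simp add: power_mult_distrib power2_eq_square)
  have e3: "(1 - \<beta>) * \<gamma> / 2 * (norm Rw)\<^sup>2 = \<gamma>/2 * (norm Rw)\<^sup>2 - \<beta>*\<gamma>/2*(norm Rw)\<^sup>2"
    by (simp add: field_simps)
  have "f pw + gpw + (\<gamma> - M*\<gamma>\<^sup>2)/2 * (norm Rx)\<^sup>2 + \<beta>*\<gamma>/2*(norm Rw)\<^sup>2 \<le> f x + gx"
    using F K A e1 e2 e3 unfolding Rx by linarith
  then show ?thesis using gpw unfolding pw_def Rx_def Rw_def by blast
qed

lemma step_one:
  fixes f :: "'a::euclidean_space \<Rightarrow> real"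
  assumes fd: "\<And>y. (f has_derivative (\<lambda>h. gf y \<bullet> h)) (at y)" and lip: "L-lipschitz_on UNIV gf"
    and L: "L > 0" and xi: "0 < \<xi>" "\<xi> < 1" and \<gamma>0: "0 < \<gamma>0" and b1: "\<beta> < 1"
    and gen: "minfbe_seq f gf g \<gamma>0 \<xi> \<beta> x w \<gamma>"
    and gp: "min \<gamma>0 (\<xi> * (1 - \<beta>) / L) \<le> (if k = 0 then \<gamma>0 else \<gamma> (k - 1))"
       "(if k = 0 then \<gamma>0 else \<gamma> (k - 1)) \<le> \<gamma>0"
  shows "min \<gamma>0 (\<xi> * (1 - \<beta>) / L) \<le> \<gamma> k \<and> \<gamma> k \<le> \<gamma>0"
proof -
  define gp where "gp = (if k = 0 then \<gamma>0 else \<gamma> (k - 1))"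
  define c0 where "c0 = min \<gamma>0 (\<xi> * (1 - \<beta>) / L)"
  have g1: "c0 \<le> gp" "gp \<le> \<gamma>0" using gp unfolding gp_def c0_def by auto
  obtain m where m: "\<gamma> k = \<xi> ^ m * gp"
    and rej: "\<forall>l<m. \<exists>w'. minfbe_admissible f gf g (\<xi> ^ l * gp) (x k) w' \<and> \<not> minfbe_accept f gf g \<beta> (\<xi> ^ l * gp) w'"
    using gen unfolding minfbe_seq_def Let_def gp_def by blast
  have "c0 > 0" unfolding c0_def using \<gamma>0 xi b1 L by simp
  then have gp0: "gp > 0" using g1 by linarith
  have up: "\<gamma> k \<le> \<gamma>0"
  proof -
    have "\<xi> ^ m \<le> 1" using xi by (simp add: power_le_one)
    then have "\<xi> ^ m * gp \<le> 1 * gp" using gp0 by (intro mult_right_mono) auto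
    then show ?thesis using m g1 by simp
  qed
  have lo: "c0 \<le> \<gamma> k"
  proof (cases m)
    case 0
    then show ?thesis using m g1 by simp
  next
    case (Suc m')
    then obtain w' where "\<not> minfbe_accept f gf g \<beta> (\<xi> ^ m' * gp) w'" using rej by blast
    moreover have "\<xi> ^ m' * gp > 0" using xi gp0 by simp
    ultimately have "\<not> \<xi> ^ m' * gp \<le> (1 - \<beta>) / L" using accept_small[OF fd lip L] by blast
    then have "(1 - \<beta>) / L < \<xi> ^ m' * gp" by simp
    then have "\<xi> * ((1 - \<beta>) / L) \<le> \<xi> * (\<xi> ^ m' * gp)" using xi by (intro mult_left_mono) auto
    then have "\<xi> * (1 - \<beta>) / L \<le> \<gamma> k" using m Suc by (simp add: mult.assoc times_divide_eq_right)
    then show ?thesis unfolding c0_def by linarith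
  qed
  show ?thesis using up lo unfolding c0_def by simp
qed

lemma step_bounds:
  fixes f :: "'a::euclidean_space \<Rightarrow> real"
  assumes fd: "\<And>y. (f has_derivative (\<lambda>h. gf y \<bullet> h)) (at y)" and lip: "L-lipschitz_on UNIV gf"
    and L: "L > 0" and xi: "0 < \<xi>" "\<xi> < 1" and \<gamma>0: "0 < \<gamma>0" and b1: "\<beta> < 1"
    and gen: "minfbe_seq f gf g \<gamma>0 \<xi> \<beta> x w \<gamma>"
  shows "min \<gamma>0 (\<xi> * (1 - \<beta>) / L) \<le> \<gamma> k \<and> \<gamma> k \<le> \<gamma>0"
proof (induction k)
  case 0
  then show ?case using step_one[OF fd lip L xi \<gamma>0 b1 gen, of 0] by simp
next
  case (Suc k)
  then show ?case using step_one[OF fd lip L xi \<gamma>0 b1 gen, of "Suc k"] by simp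
qed

lemma telescope:
  fixes \<Phi> a :: "nat \<Rightarrow> real"
  assumes "\<And>k. \<Phi> (Suc k) + a k \<le> \<Phi> k"
  shows "\<Phi> (Suc k) + (\<Sum>i\<le>k. a i) \<le> \<Phi> 0"
proof (induction k)
  case 0
  then show ?case using assms[of 0] by simp
next
  case (Suc k)
  then show ?case using assms[of "Suc k"] by simp
qed

lemma min_avg:
  fixes h :: "nat \<Rightarrow> real"
  shows "real (Suc k) * (MIN i\<in>{..k}. h i) \<le> (\<Sum>i\<le>k. h i)"
proof -
  have "of_nat (card {..k}) * (MIN i\<in>{..k}. h i) \<le> (\<Sum>i\<le>k. h i)"
    by (rule sum_bounded_below) simp
  then show ?thesis by simp
qed

lemma ereal_rhs: "(D::real) > 0 \<Longrightarrow> ereal a * ereal Z / ereal D = ereal (a * Z / D)"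
  by simp

theorem theorem2p11:
  fixes f :: "real ^ 'n \<Rightarrow> real" and gf :: "real ^ 'n \<Rightarrow> real ^ 'n"
    and g :: "real ^ 'n \<Rightarrow> ereal"
    and Lf M \<gamma>0 \<xi> \<beta> c :: real
    and x w :: "nat \<Rightarrow> real ^ 'n" and \<gamma> :: "nat \<Rightarrow> real"
  assumes f_deriv: "\<And>y. (f has_derivative (\<lambda>h. gf y \<bullet> h)) (at y)"
    and gf_cont: "continuous_on UNIV gf"
    and gf_lip: "Lf-lipschitz_on UNIV gf"
    and Lf_pos: "Lf > 0"
    and g_proper: "proper_fun g"
    and g_closed: "closed_fun g"
    and M_pos: "M > 0"
    and g_wc: "weakly_convex M g"
    and \<xi>: "0 < \<xi>" "\<xi> < 1"
    and \<beta>: "0 \<le> \<beta>" "\<beta> < 1"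
    and \<gamma>0: "0 < \<gamma>0" "\<gamma>0 \<le> 1 / (2 * M)"
    and gen: "minfbe_seq f gf g \<gamma>0 \<xi> \<beta> x w \<gamma>"
    and c_def: "c = min \<gamma>0 (min (\<xi> * (1 - \<beta>) / Lf) (1 / M))"
  shows "c > 0 \<and>
    (\<forall>k. ereal (MIN i\<in>{..k}. (norm (Rfb gf g (\<gamma> i) (x i)))\<^sup>2)
         \<le> ereal (2 / (real k + 1)) *
           ((ereal (f (x 0)) + g (x 0)) - (INF y. ereal (f y) + g y)) / ereal (c - M * c\<^sup>2)) \<and>
    (\<beta> > 0 \<longrightarrow>
      (\<forall>k. ereal (MIN i\<in>{..k}. (norm (Rfb gf g (\<gamma> i) (w i)))\<^sup>2)
         \<le> ereal (2 / (real k + 1)) *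
           ((ereal (f (x 0)) + g (x 0)) - (INF y. ereal (f y) + g y)) / ereal (\<beta> * c)))"
proof -
  have ninf: "\<forall>x. g x \<noteq> -\<infinity>" using g_proper unfolding proper_fun_def by auto
  have c0: "c > 0" using c_def \<gamma>0 \<xi> \<beta> Lf_pos M_pos by simp
  have cle: "c \<le> \<gamma>0" using c_def by simp
  have Mg0: "M * \<gamma>0 \<le> 1/2" using \<gamma>0(2) M_pos by (simp add: pos_le_divide_eq algebra_simps)
  have Mc: "M * c \<le> 1/2" using cle M_pos Mg0 by (meson order_trans mult_left_mono less_imp_le)
  have gb: "c \<le> \<gamma> k \<and> \<gamma> k \<le> \<gamma>0" for k
    using step_bounds[OF f_deriv gf_lip Lf_pos \<xi> \<gamma>0(1) \<beta>(2) gen, of k] c_def by auto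
  have gpos: "\<gamma> k > 0" for k using gb[of k] c0 by linarith
  have MgK: "M * \<gamma> k \<le> 1/2" for k using gb[of k] M_pos Mg0 by (meson order_trans mult_left_mono less_imp_le)
  have gM: "\<gamma> k * M < 1" for k using MgK[of k] by (simp add: mult.commute)
  have adm: "minfbe_admissible f gf g (\<gamma> k) (x k) (w k)" "minfbe_accept f gf g \<beta> (\<gamma> k) (w k)"
     "x (Suc k) = Tfb gf g (\<gamma> k) (w k)" for k
    using gen unfolding minfbe_seq_def Let_def by blast+
  have D0: "c - M*c\<^sup>2 > 0"
  proof -
    have "c - M*c\<^sup>2 = c * (1 - M*c)" by (simp add: power2_eq_square algebra_simps)
    moreover have "c * (1 - M*c) > 0" using c0 Mc by simp
    ultimately show ?thesis by simp
  qed
  have amono: "c - M*c\<^sup>2 \<le> \<gamma> k - M*(\<gamma> k)\<^sup>2" for k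
  proof -
    have "\<gamma> k - M*(\<gamma> k)\<^sup>2 - (c - M*c\<^sup>2) = (\<gamma> k - c) * (1 - (M * \<gamma> k + M * c))"
      by (simp add: power2_eq_square algebra_simps)
    moreover have "(\<gamma> k - c) * (1 - (M * \<gamma> k + M * c)) \<ge> 0"
      using gb[of k] MgK[of k] Mc by (intro mult_nonneg_nonneg) auto
    ultimately show ?thesis by linarith
  qed
  define I where "I = (INF y. ereal (f y) + g y)"
  define a where "a k = (\<gamma> k - M*(\<gamma> k)\<^sup>2)/2 * (norm (Rfb gf g (\<gamma> k) (x k)))\<^sup>2" for k
  define b where "b k = \<beta>*\<gamma> k/2*(norm (Rfb gf g (\<gamma> k) (w k)))\<^sup>2" for k
  have both: "ereal (MIN i\<in>{..k}. (norm (Rfb gf g (\<gamma> i) (x i)))\<^sup>2)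
         \<le> ereal (2 / (real k + 1)) * ((ereal (f (x 0)) + g (x 0)) - I) / ereal (c - M * c\<^sup>2) \<and>
    (\<beta> > 0 \<longrightarrow> ereal (MIN i\<in>{..k}. (norm (Rfb gf g (\<gamma> i) (w i)))\<^sup>2)
         \<le> ereal (2 / (real k + 1)) * ((ereal (f (x 0)) + g (x 0)) - I) / ereal (\<beta> * c))" for k
  proof (cases "g (x 0) = \<infinity> \<or> I = -\<infinity>")
    case True
    have inf: "(ereal (f (x 0)) + g (x 0)) - I = \<infinity>"
      using True ninf[rule_format, of "x 0"] by (cases I; cases "g (x 0)") auto
    have p2: "2 / (real k + 1) > 0" by simp
    show ?thesis unfolding inf using p2 D0 c0 by simp
  next
    case False
    then obtain g0 where g0: "g (x 0) = ereal g0" using ninf by (cases "g (x 0)") auto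
    have "I \<le> ereal (f (x 0)) + g (x 0)" unfolding I_def by (rule INF_lower) simp
    then obtain Ir where Ir: "I = ereal Ir" using False g0 by (cases I) auto
    define G where "G k = real_of_ereal (g (x k))" for k
    have st: "g (x k) = ereal (G k) \<and> f (x (Suc k)) + G (Suc k) + a k + b k \<le> f (x k) + G k" for k
    proof (induction k)
      case 0
      have gx: "g (x 0) = ereal (G 0)" unfolding G_def using g0 by simp
      obtain gn where gn: "g (Tfb gf g (\<gamma> 0) (w 0)) = ereal gn"
        "f (Tfb gf g (\<gamma> 0) (w 0)) + gn + (\<gamma> 0 - M*(\<gamma> 0)\<^sup>2)/2 * (norm (Rfb gf g (\<gamma> 0) (x 0)))\<^sup>2
          + \<beta>*\<gamma> 0/2*(norm (Rfb gf g (\<gamma> 0) (w 0)))\<^sup>2 \<le> f (x 0) + G 0"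
        using iter_step[OF g_proper g_closed g_wc M_pos gpos gM adm(1) adm(2) gx] by blast
      have "G (Suc 0) = gn" unfolding G_def using gn(1) adm(3)[of 0] by simp
      then show ?case using gx gn(2) adm(3)[of 0] unfolding a_def b_def by simp
    next
      case (Suc k)
      have gx: "g (x (Suc k)) = ereal (G (Suc k))"
      proof -
        obtain gn where gn: "g (Tfb gf g (\<gamma> k) (w k)) = ereal gn"
          using iter_step[OF g_proper g_closed g_wc M_pos gpos gM adm(1) adm(2)] Suc.IH by blast
        then show ?thesis unfolding G_def using adm(3)[of k] by simp
      qed
      obtain gn where gn: "g (Tfb gf g (\<gamma> (Suc k)) (w (Suc k))) = ereal gn"
        "f (Tfb gf g (\<gamma> (Suc k)) (w (Suc k))) + gn + (\<gamma> (Suc k) - M*(\<gamma> (Suc k))\<^sup>2)/2 * (norm (Rfb gf g (\<gamma> (Suc k)) (x (Suc k))))\<^sup>2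
          + \<beta>*\<gamma> (Suc k)/2*(norm (Rfb gf g (\<gamma> (Suc k)) (w (Suc k))))\<^sup>2 \<le> f (x (Suc k)) + G (Suc k)"
        using iter_step[OF g_proper g_closed g_wc M_pos gpos gM adm(1) adm(2) gx] by blast
      have "G (Suc (Suc k)) = gn" unfolding G_def using gn(1) adm(3)[of "Suc k"] by simp
      then show ?case using gx gn(2) adm(3)[of "Suc k"] unfolding a_def b_def by simp
    qed
    define \<Phi> where "\<Phi> k = f (x k) + G k" for k
    have tel: "\<Phi> (Suc k) + (\<Sum>i\<le>k. a i + b i) \<le> \<Phi> 0"
      by (rule telescope) (use st in \<open>simp add: \<Phi>_def add.assoc\<close>)
    have "I \<le> ereal (f (x (Suc k))) + g (x (Suc k))" unfolding I_def by (rule INF_lower) simp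
    then have low: "Ir \<le> \<Phi> (Suc k)" using st[of "Suc k"] Ir unfolding \<Phi>_def by simp
    have a0: "a i \<ge> (c - M*c\<^sup>2)/2 * (norm (Rfb gf g (\<gamma> i) (x i)))\<^sup>2" for i
      unfolding a_def using amono[of i] by (intro mult_right_mono) auto
    have b0: "b i \<ge> \<beta>*c/2 * (norm (Rfb gf g (\<gamma> i) (w i)))\<^sup>2" for i
      unfolding b_def using gb[of i] \<beta>(1) by (intro mult_right_mono) (auto intro: mult_left_mono)
    have a00: "a i \<ge> 0" for i using a0[of i] D0 by (meson order_trans mult_nonneg_nonneg less_imp_le zero_le_power2 divide_nonneg_pos zero_less_numeral)
    have b00: "b i \<ge> 0" for i using b0[of i] c0 \<beta>(1) by (meson order_trans mult_nonneg_nonneg less_imp_le zero_le_power2 divide_nonneg_pos zero_less_numeral)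
    have sab: "(\<Sum>i\<le>k. a i + b i) = (\<Sum>i\<le>k. a i) + (\<Sum>i\<le>k. b i)" by (rule sum.distrib)
    have sa0: "(\<Sum>i\<le>k. a i) \<ge> 0" using a00 by (simp add: sum_nonneg)
    have sb0: "(\<Sum>i\<le>k. b i) \<ge> 0" using b00 by (simp add: sum_nonneg)
    have SA: "(\<Sum>i\<le>k. a i) \<le> \<Phi> 0 - Ir" using tel low sab sb0 by linarith
    have SB: "(\<Sum>i\<le>k. b i) \<le> \<Phi> 0 - Ir" using tel low sab sa0 by linarith
    have fin: "m \<le> 2 / (real k + 1) * Z / D" if "D > 0" "D/2 * (real (Suc k) * m) \<le> Z" for m Z D
    proof -
      have "2 / (real k + 1) * Z / D = Z / (D/2 * real (Suc k))" by (simp add: field_simps)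
      moreover have "m * (D/2 * real (Suc k)) \<le> Z" using that(2) by (simp add: algebra_simps)
      ultimately show ?thesis using that(1) by (simp add: pos_le_divide_eq)
    qed
    have A: "(c - M*c\<^sup>2)/2 * (real (Suc k) * (MIN i\<in>{..k}. (norm (Rfb gf g (\<gamma> i) (x i)))\<^sup>2)) \<le> \<Phi> 0 - Ir"
    proof -
      have "(c - M*c\<^sup>2)/2 * (real (Suc k) * (MIN i\<in>{..k}. (norm (Rfb gf g (\<gamma> i) (x i)))\<^sup>2))
          \<le> (c - M*c\<^sup>2)/2 * (\<Sum>i\<le>k. (norm (Rfb gf g (\<gamma> i) (x i)))\<^sup>2)"
        using D0 min_avg by (intro mult_left_mono) auto
      also have "\<dots> = (\<Sum>i\<le>k. (c - M*c\<^sup>2)/2 * (norm (Rfb gf g (\<gamma> i) (x i)))\<^sup>2)" by (simp add: sum_distrib_left)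
      also have "\<dots> \<le> (\<Sum>i\<le>k. a i)" using a0 by (intro sum_mono) auto
      finally show ?thesis using SA by linarith
    qed
    have B: "\<beta>*c/2 * (real (Suc k) * (MIN i\<in>{..k}. (norm (Rfb gf g (\<gamma> i) (w i)))\<^sup>2)) \<le> \<Phi> 0 - Ir"
    proof -
      have "\<beta>*c/2 * (real (Suc k) * (MIN i\<in>{..k}. (norm (Rfb gf g (\<gamma> i) (w i)))\<^sup>2))
          \<le> \<beta>*c/2 * (\<Sum>i\<le>k. (norm (Rfb gf g (\<gamma> i) (w i)))\<^sup>2)"
        using c0 \<beta>(1) min_avg by (intro mult_left_mono) auto
      also have "\<dots> = (\<Sum>i\<le>k. \<beta>*c/2 * (norm (Rfb gf g (\<gamma> i) (w i)))\<^sup>2)" by (simp add: sum_distrib_left)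
      also have "\<dots> \<le> (\<Sum>i\<le>k. b i)" using b0 by (intro sum_mono) auto
      finally show ?thesis using SB by linarith
    qed
    have P0: "\<Phi> 0 = f (x 0) + g0" unfolding \<Phi>_def G_def using g0 by simp
    have r1: "ereal (f (x 0)) + g (x 0) - I = ereal (\<Phi> 0 - Ir)" using g0 Ir P0 by simp
    show ?thesis
    proof (intro conjI impI)
      show "ereal (MIN i\<in>{..k}. (norm (Rfb gf g (\<gamma> i) (x i)))\<^sup>2)
         \<le> ereal (2 / (real k + 1)) * ((ereal (f (x 0)) + g (x 0)) - I) / ereal (c - M * c\<^sup>2)"
        unfolding r1 ereal_rhs[OF D0] using fin[OF D0 A] by simp
    next
      assume bp: "\<beta> > 0"
      have bc: "\<beta> * c > 0" using bp c0 by simp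
      have B': "(\<beta> * c)/2 * (real (Suc k) * (MIN i\<in>{..k}. (norm (Rfb gf g (\<gamma> i) (w i)))\<^sup>2)) \<le> \<Phi> 0 - Ir"
        using B by simp
      show "ereal (MIN i\<in>{..k}. (norm (Rfb gf g (\<gamma> i) (w i)))\<^sup>2)
         \<le> ereal (2 / (real k + 1)) * ((ereal (f (x 0)) + g (x 0)) - I) / ereal (\<beta> * c)"
        unfolding r1 ereal_rhs[OF bc] using fin[OF bc B'] by simp
    qed
  qed
  show ?thesis using c0 both unfolding I_def by blast
qed

end
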